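(* Let $K\in L_2(\mathbb R)$ be a kernel (satisfying the standing assumptions below) with $S_K=0$. Then for every probability density $f\in L_2(\mathbb R)$, $\lim_{n\to\infty} n\,\Phi(n,f,K)=\infty$.
   Context: A kernel is an integrable function $K:\mathbb R\to\mathbb R$ with $\int K=1$; standing assumptions: $K$ is bounded, continuous at $0$, and $\int K^2<2K(0)$. For a sample $X_1,\dots,X_n$ i.i.d. with density $f$, bandwidth $h>0$, $f_{n,K,h}(x)=\frac1n\sum_{i=1}^n K_h(x-X_i)$ with $K_h(x)=K(x/h)/h$. $\mathrm{MISE}_f(f_{n,K,h})=E_f\int (f_{n,K,h}-f)^2$, and $\Phi(n,f,K)=\min_{h>0}\mathrm{MISE}_f(f_{n,K,h})$ (the minimum exists under the standing assumptions). $\varphi_K(t)=\int e^{itx}K(x)dx$ and $S_K=\inf\{t\ge0: |\varphi_K(t)-1|\ne0\}$. *)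

theory Defs
  imports "HOL-Probability.Probability"
begin

definition is_kernel :: "(real \<Rightarrow> real) \<Rightarrow> bool" where
  "is_kernel K \<longleftrightarrow>
     integrable lborel K \<and> (LINT x|lborel. K x) = 1 \<and>
     (\<exists>B. \<forall>x. \<bar>K x\<bar> \<le> B) \<and> isCont K 0 \<and>
     (LINT x|lborel. (K x)\<^sup>2) < 2 * K 0"

definition is_density :: "(real \<Rightarrow> real) \<Rightarrow> bool" where
  "is_density f \<longleftrightarrow> f \<in> borel_measurable lborel \<and> (\<forall>x. 0 \<le> f x) \<and>
     integrable lborel f \<and> (LINT x|lborel. f x) = 1"

definition kde :: "nat \<Rightarrow> (real \<Rightarrow> real) \<Rightarrow> real \<Rightarrow> (nat \<Rightarrow> real) \<Rightarrow> real \<Rightarrow> real" where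
  "kde n K h X x = (\<Sum>i<n. K ((x - X i) / h) / h) / real n"

definition sample :: "nat \<Rightarrow> (real \<Rightarrow> real) \<Rightarrow> (nat \<Rightarrow> real) measure" where
  "sample n f = PiM {..<n} (\<lambda>_. density lborel (\<lambda>x. ennreal (f x)))"

definition MISE :: "nat \<Rightarrow> (real \<Rightarrow> real) \<Rightarrow> (real \<Rightarrow> real) \<Rightarrow> real \<Rightarrow> ennreal" where
  "MISE n f K h =
     (\<integral>\<^sup>+ X. (\<integral>\<^sup>+ x. ennreal ((kde n K h X x - f x)\<^sup>2) \<partial>lborel) \<partial>sample n f)"

text \<open>Phi(n,f,K) = min over h > 0 of the MISE (the minimum exists under the standing
  assumptions, so it coincides with the infimum).\<close>
definition Phi :: "nat \<Rightarrow> (real \<Rightarrow> real) \<Rightarrow> (real \<Rightarrow> real) \<Rightarrow> ennreal" where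
  "Phi n f K = (INF h\<in>{0<..}. MISE n f K h)"

definition char_fun :: "(real \<Rightarrow> real) \<Rightarrow> real \<Rightarrow> complex" where
  "char_fun K t = (LINT x|lborel. cis (t * x) * complex_of_real (K x))"

definition S_K :: "(real \<Rightarrow> real) \<Rightarrow> real" where
  "S_K K = Inf {t. 0 \<le> t \<and> cmod (char_fun K t - 1) \<noteq> 0}"

end

theory Submission
  imports Defs
begin



lemma PiM_prod_comp:
  fixes M :: "real measure" and F :: "nat \<Rightarrow> real \<Rightarrow> real"
  assumes "prob_space M" "finite I" "\<And>k. k \<in> I \<Longrightarrow> integrable M (F k)"
  shows "(\<integral>X. (\<Prod>k\<in>I. F k (X k)) \<partial>PiM I (\<lambda>_. M)) = (\<Prod>k\<in>I. \<integral>y. F k y \<partial>M)"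
proof -
  interpret product_sigma_finite "\<lambda>_. M"
    using assms(1) by (simp add: product_sigma_finite_def prob_space_imp_sigma_finite)
  show ?thesis using assms(2,3) by (rule product_integral_prod)
qed

lemma sq_sum_PiM:
  fixes M :: "real measure" and g :: "real \<Rightarrow> real"
  assumes P: "prob_space M" and gm[measurable]: "g \<in> borel_measurable M" and gb: "\<And>y. \<bar>g y\<bar> \<le> C"
  shows "(\<integral>X. (\<Sum>i<n. g (X i))\<^sup>2 \<partial>PiM {..<n} (\<lambda>_. M))
         = real n * (\<integral>y. (g y)\<^sup>2 \<partial>M) + real n * (real n - 1) * (\<integral>y. g y \<partial>M)\<^sup>2"
proof -
  interpret prob_space M by fact
  let ?P = "PiM {..<n} (\<lambda>_. M)"
  interpret PP: prob_space ?P by (intro prob_space_PiM) (simp add: P)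
  have gi: "integrable M g" by (rule integrable_const_bound[where B=C]) (use gb in auto)
  have g2i: "integrable M (\<lambda>y. (g y)^2)"
  proof (rule integrable_const_bound[where B="C^2"])
    have "(g y)^2 \<le> C^2" for y using power_mono[OF gb[of y] abs_ge_zero, of 2] by simp
    then show "AE x in M. norm ((g x)^2) \<le> C^2" by simp
  qed simp
  have oi: "integrable M (\<lambda>y. 1::real)" by simp
  have ggi: "integrable M (\<lambda>y. g y * g y)" using g2i by (simp add: power2_eq_square)
  define F where "F i j k = (if k = i \<and> k = j then (\<lambda>y. g y * g y) else if k = i \<or> k = j then g else (\<lambda>y. 1::real))" for i j k :: nat
  have Fi: "integrable M (F i j k)" for i j k using gi oi ggi by (auto simp: F_def)
  have prodeq: "(\<Prod>k<n. F i j k (X k)) = g (X i) * g (X j)" if "i < n" "j < n" for i j X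
  proof (cases "i = j")
    case True
    have "(\<Prod>k<n. F i j k (X k)) = (\<Prod>k\<in>{i}. F i j k (X k))"
      by (rule prod.mono_neutral_right) (use that True in \<open>auto simp: F_def\<close>)
    then show ?thesis using True by (simp add: F_def)
  next
    case False
    have "(\<Prod>k<n. F i j k (X k)) = (\<Prod>k\<in>{i,j}. F i j k (X k))"
      by (rule prod.mono_neutral_right) (use that False in \<open>auto simp: F_def\<close>)
    then show ?thesis using False by (simp add: F_def)
  qed
  have inteq: "(\<integral>X. g (X i) * g (X j) \<partial>?P) = (if i = j then (\<integral>y. (g y)\<^sup>2 \<partial>M) else (\<integral>y. g y \<partial>M)\<^sup>2)"
    if "i < n" "j < n" for i j
  proof -
    have "(\<integral>X. g (X i) * g (X j) \<partial>?P) = (\<integral>X. (\<Prod>k<n. F i j k (X k)) \<partial>?P)"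
      by (rule Bochner_Integration.integral_cong[OF refl]) (simp add: prodeq that)
    also have "\<dots> = (\<Prod>k<n. \<integral>y. F i j k y \<partial>M)"
      by (rule PiM_prod_comp) (auto simp: P Fi)
    also have "\<dots> = (if i = j then (\<integral>y. (g y)\<^sup>2 \<partial>M) else (\<integral>y. g y \<partial>M)\<^sup>2)"
    proof (cases "i = j")
      case True
      have "(\<Prod>k<n. \<integral>y. F i j k y \<partial>M) = (\<Prod>k\<in>{i}. \<integral>y. F i j k y \<partial>M)"
        by (rule prod.mono_neutral_right) (use that True in \<open>auto simp: F_def prob_space\<close>)
      then show ?thesis using True by (simp add: F_def power2_eq_square)
    next
      case False
      have "(\<Prod>k<n. \<integral>y. F i j k y \<partial>M) = (\<Prod>k\<in>{i,j}. \<integral>y. F i j k y \<partial>M)"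
        by (rule prod.mono_neutral_right) (use that False in \<open>auto simp: F_def prob_space\<close>)
      then show ?thesis using False by (simp add: F_def power2_eq_square)
    qed
    finally show ?thesis .
  qed
  have pint: "integrable ?P (\<lambda>X. g (X i) * g (X j))" if "i < n" "j < n" for i j
  proof (rule PP.integrable_const_bound[where B="C*C"])
    show "AE X in ?P. norm (g (X i) * g (X j)) \<le> C * C"
      using gb by (auto simp: abs_mult intro!: mult_mono order_trans[OF abs_ge_zero gb])
    show "(\<lambda>X. g (X i) * g (X j)) \<in> borel_measurable ?P"
      by (intro borel_measurable_times measurable_compose[OF measurable_component_singleton[where M="\<lambda>_. M"] gm]) (auto simp: that)
  qed
  have "(\<integral>X. (\<Sum>i<n. g (X i))\<^sup>2 \<partial>?P) = (\<integral>X. (\<Sum>i<n. \<Sum>j<n. g (X i) * g (X j)) \<partial>?P)"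
    by (simp add: power2_eq_square sum_product)
  also have "\<dots> = (\<Sum>i<n. \<Sum>j<n. (\<integral>X. g (X i) * g (X j) \<partial>?P))"
    proof -
    have "(\<integral>X. (\<Sum>i<n. \<Sum>j<n. g (X i) * g (X j)) \<partial>?P) = (\<Sum>i<n. (\<integral>X. (\<Sum>j<n. g (X i) * g (X j)) \<partial>?P))"
      by (rule Bochner_Integration.integral_sum[where f="\<lambda>i X. \<Sum>j<n. g (X i) * g (X j)"]) (auto intro!: integrable_sum pint)
    also have "\<dots> = (\<Sum>i<n. \<Sum>j<n. (\<integral>X. g (X i) * g (X j) \<partial>?P))"
      by (rule sum.cong[OF refl], rule Bochner_Integration.integral_sum[where f="\<lambda>j X. g (X i) * g (X j)" for i]) (auto intro!: pint)
    finally show ?thesis .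
  qed
  also have "\<dots> = (\<Sum>i<n. \<Sum>j<n. (if i = j then (\<integral>y. (g y)\<^sup>2 \<partial>M) else (\<integral>y. g y \<partial>M)\<^sup>2))"
    by (simp add: inteq)
  also have "\<dots> = (\<Sum>i<n. (\<integral>y. (g y)\<^sup>2 \<partial>M) + (real n - 1) * (\<integral>y. g y \<partial>M)\<^sup>2)"
  proof (rule sum.cong[OF refl])
    fix i assume i: "i \<in> {..<n}"
    have "(\<Sum>j<n. (if i = j then (\<integral>y. (g y)\<^sup>2 \<partial>M) else (\<integral>y. g y \<partial>M)\<^sup>2))
       = (\<Sum>j<n. ((if i = j then (\<integral>y. (g y)\<^sup>2 \<partial>M) - (\<integral>y. g y \<partial>M)\<^sup>2 else 0) + (\<integral>y. g y \<partial>M)\<^sup>2))"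
      by (rule sum.cong) auto
    also have "\<dots> = (\<integral>y. (g y)\<^sup>2 \<partial>M) - (\<integral>y. g y \<partial>M)\<^sup>2 + real n * (\<integral>y. g y \<partial>M)\<^sup>2"
      using i by (simp add: sum.distrib)
    finally show "(\<Sum>j<n. (if i = j then (\<integral>y. (g y)\<^sup>2 \<partial>M) else (\<integral>y. g y \<partial>M)\<^sup>2))
       = (\<integral>y. (g y)\<^sup>2 \<partial>M) + (real n - 1) * (\<integral>y. g y \<partial>M)\<^sup>2" by (simp add: algebra_simps)
  qed
  also have "\<dots> = real n * (\<integral>y. (g y)\<^sup>2 \<partial>M) + real n * (real n - 1) * (\<integral>y. g y \<partial>M)\<^sup>2"
    by (simp add: algebra_simps)
  finally show ?thesis .
qed



lemma nn_swap:
  assumes "sigma_finite_measure M1" "sigma_finite_measure M2"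
    "(\<lambda>p. F (fst p) (snd p)) \<in> borel_measurable (M1 \<Otimes>\<^sub>M M2)"
  shows "(\<integral>\<^sup>+x. \<integral>\<^sup>+y. F x y \<partial>M2 \<partial>M1) = (\<integral>\<^sup>+y. \<integral>\<^sup>+x. F x y \<partial>M1 \<partial>M2)"
proof -
  interpret pair_sigma_finite M1 M2 using assms(1,2) by (simp add: pair_sigma_finite_def)
  show ?thesis using Fubini[OF assms(3)] by simp
qed

locale kset =
  fixes K f :: "real \<Rightarrow> real"
  assumes ker: "is_kernel K" and K2: "integrable lborel (\<lambda>x. (K x)\<^sup>2)"
    and SK: "S_K K = 0" and dens: "is_density f" and f2: "integrable lborel (\<lambda>x. (f x)\<^sup>2)"
begin

definition M where "M = density lborel (\<lambda>x. ennreal (f x))"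
definition B where "B = (SOME B. \<forall>x. \<bar>K x\<bar> \<le> B)"
definition NK2 where "NK2 = (\<integral>x. (K x)\<^sup>2 \<partial>lborel)"
definition NF2 where "NF2 = (\<integral>x. (f x)\<^sup>2 \<partial>lborel)"

lemma Kint: "integrable lborel K" using ker by (simp add: is_kernel_def)
lemma Kone: "(\<integral>x. K x \<partial>lborel) = 1" using ker by (simp add: is_kernel_def)
lemma Kmeas[measurable]: "K \<in> borel_measurable borel"
  using borel_measurable_integrable[OF Kint] by simp
lemma fmeas[measurable]: "f \<in> borel_measurable borel"
  using dens by (simp add: is_density_def)
lemma fnn: "0 \<le> f x" using dens by (simp add: is_density_def)
lemma fint: "integrable lborel f" using dens by (simp add: is_density_def)
lemma fone: "(\<integral>x. f x \<partial>lborel) = 1" using dens by (simp add: is_density_def)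
lemma KB: "\<bar>K x\<bar> \<le> B"
proof -
  have "\<exists>B. \<forall>x. \<bar>K x\<bar> \<le> B" using ker by (simp add: is_kernel_def)
  then have "\<forall>x. \<bar>K x\<bar> \<le> (SOME B. \<forall>x. \<bar>K x\<bar> \<le> B)" by (rule someI_ex)
  then show ?thesis unfolding B_def by blast
qed
lemma B_nn: "0 \<le> B" using KB[of 0] by linarith

lemma sets_M[measurable_cong]: "sets M = sets borel" by (simp add: M_def)
lemma space_M[simp]: "space M = UNIV" by (simp add: M_def)

lemma nn_f: "(\<integral>\<^sup>+x. ennreal (f x) \<partial>lborel) = 1"
  using nn_integral_eq_integral[OF fint] fnn fone by simp

lemma prob_M: "prob_space M"
  by (rule prob_spaceI) (simp add: M_def emeasure_density nn_f)

sublocale PM: prob_space M by (rule prob_M)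

lemma integral_M: "g \<in> borel_measurable borel \<Longrightarrow> (\<integral>y. g y \<partial>M) = (\<integral>y. f y * g y \<partial>lborel)" for g :: "real \<Rightarrow> real"
  unfolding M_def by (subst integral_density) (auto simp: fnn)

lemma nn_integral_M: "g \<in> borel_measurable borel \<Longrightarrow> (\<integral>\<^sup>+y. g y \<partial>M) = (\<integral>\<^sup>+y. ennreal (f y) * g y \<partial>lborel)"
  unfolding M_def by (subst nn_integral_density) auto

lemma NK2_pos: "0 < NK2"
proof -
  have "0 \<le> NK2" unfolding NK2_def by simp
  moreover have "NK2 \<noteq> 0"
  proof
    assume "NK2 = 0"
    then have "AE x in lborel. (K x)\<^sup>2 = 0"
      using integral_nonneg_eq_0_iff_AE[OF K2] by (simp add: NK2_def)
    then have "AE x in lborel. K x = 0" by simp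
    then have "(\<integral>x. K x \<partial>lborel) = 0" by (simp add: integral_eq_zero_AE)
    then show False using Kone by simp
  qed
  ultimately show ?thesis by simp
qed

lemma NF2_pos: "0 < NF2"
proof -
  have "0 \<le> NF2" unfolding NF2_def by simp
  moreover have "NF2 \<noteq> 0"
  proof
    assume "NF2 = 0"
    then have "AE x in lborel. (f x)\<^sup>2 = 0"
      using integral_nonneg_eq_0_iff_AE[OF f2] by (simp add: NF2_def)
    then have "AE x in lborel. f x = 0" by simp
    then have "(\<integral>x. f x \<partial>lborel) = 0" by (simp add: integral_eq_zero_AE)
    then show False using fone by simp
  qed
  ultimately show ?thesis by simp
qed

lemma nnK2: "(\<integral>\<^sup>+x. ennreal ((K x)\<^sup>2) \<partial>lborel) = ennreal NK2"
  unfolding NK2_def by (rule nn_integral_eq_integral[OF K2]) simp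

lemma nnF2: "(\<integral>\<^sup>+x. ennreal ((f x)\<^sup>2) \<partial>lborel) = ennreal NF2"
  unfolding NF2_def by (rule nn_integral_eq_integral[OF f2]) simp

lemma nnKh2: assumes h: "0 < h"
  shows "(\<integral>\<^sup>+x. ennreal ((K ((x - y) / h) / h)\<^sup>2) \<partial>lborel) = ennreal (NK2 / h)"
proof -
  have "(\<integral>\<^sup>+x. ennreal ((K ((x - y) / h) / h)\<^sup>2) \<partial>lborel)
     = ennreal \<bar>h\<bar> * (\<integral>\<^sup>+u. ennreal ((K ((y + h * u - y) / h) / h)\<^sup>2) \<partial>lborel)"
    by (rule nn_integral_real_affine) (use h in auto)
  also have "\<dots> = ennreal h * (\<integral>\<^sup>+u. ennreal ((K u)\<^sup>2) * ennreal (1 / h^2) \<partial>lborel)"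
  proof -
    have "(K ((y + h * u - y) / h) / h)\<^sup>2 = (K u)\<^sup>2 * (1 / h^2)" for u
      using h by (simp add: power_divide)
    then show ?thesis using h by (simp add: ennreal_mult[symmetric] del: ennreal_mult')
  qed
  also have "\<dots> = ennreal h * (ennreal NK2 * ennreal (1 / h^2))"
    by (simp add: nn_integral_multc nnK2)
  also have "\<dots> = ennreal (NK2 / h)"
    using h NK2_pos by (simp add: ennreal_mult[symmetric] power2_eq_square field_simps)
  finally show ?thesis .
qed

lemma KT: assumes h: "0 < h"
  shows "(\<integral>\<^sup>+x. \<integral>\<^sup>+y. ennreal ((K ((x - y) / h) / h)\<^sup>2) \<partial>M \<partial>lborel) = ennreal (NK2 / h)"
proof -
  have "(\<integral>\<^sup>+x. \<integral>\<^sup>+y. ennreal ((K ((x - y) / h) / h)\<^sup>2) \<partial>M \<partial>lborel)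
      = (\<integral>\<^sup>+y. \<integral>\<^sup>+x. ennreal ((K ((x - y) / h) / h)\<^sup>2) \<partial>lborel \<partial>M)"
    by (rule nn_swap) (auto simp: PM.sigma_finite_measure_axioms lborel.sigma_finite_measure_axioms)
  also have "\<dots> = (\<integral>\<^sup>+y. ennreal (NK2 / h) \<partial>M)"
    by (simp add: nnKh2 h)
  also have "\<dots> = ennreal (NK2 / h)" using PM.emeasure_space_1 by simp
  finally show ?thesis .
qed

end



context kset begin

definition g where "g h x y = K ((x - y) / h) / h - f x"

lemma g_meas[measurable]: "(\<lambda>p. g h (fst p) (snd p)) \<in> borel_measurable (borel \<Otimes>\<^sub>M borel)"
  unfolding g_def by measurable

lemma g_meas2[measurable]: "g h x \<in> borel_measurable borel"
  unfolding g_def by measurable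

lemma g_bound: "0 < h \<Longrightarrow> \<bar>g h x y\<bar> \<le> B / h + f x"
proof -
  assume h: "0 < h"
  have "\<bar>K ((x - y) / h) / h\<bar> \<le> B / h"
    using KB[of "(x - y) / h"] h by (simp add: divide_right_mono)
  then show ?thesis unfolding g_def using fnn[of x] by linarith
qed

lemma sample_eq: "sample n f = PiM {..<n} (\<lambda>_. M)"
  by (simp add: sample_def M_def)

lemma MISE_eq:
  assumes n: "0 < n" and h: "0 < h"
  shows "of_nat n * MISE n f K h =
    (\<integral>\<^sup>+x. ennreal ((\<integral>y. (g h x y)\<^sup>2 \<partial>M) + (real n - 1) * (\<integral>y. g h x y \<partial>M)\<^sup>2) \<partial>lborel)"
proof -
  let ?S = "PiM {..<n} (\<lambda>_. M)"
  interpret S: prob_space ?S by (intro prob_space_PiM) (simp add: prob_M)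
  have meas: "(\<lambda>p. ennreal ((kde n K h (fst p) (snd p) - f (snd p))\<^sup>2)) \<in> borel_measurable (?S \<Otimes>\<^sub>M lborel)"
    unfolding kde_def by measurable
  have "MISE n f K h = (\<integral>\<^sup>+X. \<integral>\<^sup>+x. ennreal ((kde n K h X x - f x)\<^sup>2) \<partial>lborel \<partial>?S)"
    by (simp add: MISE_def sample_eq)
  also have "\<dots> = (\<integral>\<^sup>+x. \<integral>\<^sup>+X. ennreal ((kde n K h X x - f x)\<^sup>2) \<partial>?S \<partial>lborel)"
    by (rule nn_swap[OF _ _ meas]) (auto simp: S.sigma_finite_measure_axioms lborel.sigma_finite_measure_axioms)
  also have "\<dots> = (\<integral>\<^sup>+x. ennreal (((\<integral>y. (g h x y)\<^sup>2 \<partial>M) + (real n - 1) * (\<integral>y. g h x y \<partial>M)\<^sup>2) / real n) \<partial>lborel)"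
  proof (rule nn_integral_cong)
    fix x
    have eq: "kde n K h X x - f x = (\<Sum>i<n. g h x (X i)) / real n" for X
      using n by (simp add: kde_def g_def sum_subtractf sum_divide_distrib[symmetric] field_simps)
    have bnd: "\<bar>g h x y\<bar> \<le> B / h + f x" for y by (rule g_bound[OF h])
    have int: "integrable ?S (\<lambda>X. ((\<Sum>i<n. g h x (X i)) / real n)\<^sup>2)"
    proof (rule S.integrable_const_bound[where B="(real n * (B / h + f x))\<^sup>2"])
      show "AE X in ?S. norm (((\<Sum>i<n. g h x (X i)) / real n)\<^sup>2) \<le> (real n * (B / h + f x))\<^sup>2"
      proof (rule AE_I2)
        fix X
        have "\<bar>\<Sum>i<n. g h x (X i)\<bar> \<le> (\<Sum>i<n. \<bar>g h x (X i)\<bar>)" by (rule sum_abs)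
        also have "\<dots> \<le> (\<Sum>i<n. B / h + f x)" by (rule sum_mono) (rule bnd)
        also have "\<dots> = real n * (B / h + f x)" by simp
        finally have a: "\<bar>\<Sum>i<n. g h x (X i)\<bar> \<le> real n * (B / h + f x)" .
        have n1: "1 \<le> real n" using n by simp
        have "\<bar>\<Sum>i<n. g h x (X i)\<bar> * 1 \<le> \<bar>\<Sum>i<n. g h x (X i)\<bar> * real n"
          by (rule mult_left_mono[OF n1]) simp
        then have "\<bar>(\<Sum>i<n. g h x (X i)) / real n\<bar> \<le> \<bar>\<Sum>i<n. g h x (X i)\<bar>"
          using n by (simp add: abs_divide divide_le_eq)
        then have "\<bar>(\<Sum>i<n. g h x (X i)) / real n\<bar> \<le> real n * (B / h + f x)" using a by linarith
        then have "\<bar>(\<Sum>i<n. g h x (X i)) / real n\<bar>\<^sup>2 \<le> (real n * (B / h + f x))\<^sup>2"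
          by (rule power_mono) simp
        then show "norm (((\<Sum>i<n. g h x (X i)) / real n)\<^sup>2) \<le> (real n * (B / h + f x))\<^sup>2"
          by (simp only: real_norm_def power2_abs abs_power2)
      qed
    qed measurable
    have "(\<integral>\<^sup>+X. ennreal ((kde n K h X x - f x)\<^sup>2) \<partial>?S) = (\<integral>\<^sup>+X. ennreal (((\<Sum>i<n. g h x (X i)) / real n)\<^sup>2) \<partial>?S)"
      by (simp add: eq)
    also have "\<dots> = ennreal (\<integral>X. ((\<Sum>i<n. g h x (X i)) / real n)\<^sup>2 \<partial>?S)"
      by (rule nn_integral_eq_integral[OF int]) simp
    also have "(\<integral>X. ((\<Sum>i<n. g h x (X i)) / real n)\<^sup>2 \<partial>?S) = (\<integral>X. (\<Sum>i<n. g h x (X i))\<^sup>2 \<partial>?S) / (real n)\<^sup>2"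
      by (simp add: power_divide)
    also have "(\<integral>X. (\<Sum>i<n. g h x (X i))\<^sup>2 \<partial>?S) = real n * (\<integral>y. (g h x y)\<^sup>2 \<partial>M) + real n * (real n - 1) * (\<integral>y. g h x y \<partial>M)\<^sup>2"
      by (rule sq_sum_PiM[OF prob_M _ bnd]) (simp add: sets_M)
    also have "(real n * (\<integral>y. (g h x y)\<^sup>2 \<partial>M) + real n * (real n - 1) * (\<integral>y. g h x y \<partial>M)\<^sup>2) / (real n)\<^sup>2
        = ((\<integral>y. (g h x y)\<^sup>2 \<partial>M) + (real n - 1) * (\<integral>y. g h x y \<partial>M)\<^sup>2) / real n"
      using n by (simp add: power2_eq_square field_simps)
    finally show "(\<integral>\<^sup>+X. ennreal ((kde n K h X x - f x)\<^sup>2) \<partial>?S) = ennreal (((\<integral>y. (g h x y)\<^sup>2 \<partial>M) + (real n - 1) * (\<integral>y. g h x y \<partial>M)\<^sup>2) / real n)" .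
  qed
  finally have "of_nat n * MISE n f K h = of_nat n * (\<integral>\<^sup>+x. ennreal (((\<integral>y. (g h x y)\<^sup>2 \<partial>M) + (real n - 1) * (\<integral>y. g h x y \<partial>M)\<^sup>2) / real n) \<partial>lborel)"
    by simp
  also have "\<dots> = (\<integral>\<^sup>+x. of_nat n * ennreal (((\<integral>y. (g h x y)\<^sup>2 \<partial>M) + (real n - 1) * (\<integral>y. g h x y \<partial>M)\<^sup>2) / real n) \<partial>lborel)"
    by (rule nn_integral_cmult[symmetric]) measurable
  also have "\<dots> = (\<integral>\<^sup>+x. ennreal ((\<integral>y. (g h x y)\<^sup>2 \<partial>M) + (real n - 1) * (\<integral>y. g h x y \<partial>M)\<^sup>2) \<partial>lborel)"
  proof (rule nn_integral_cong)
    fix x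
    have nn: "0 \<le> ((\<integral>y. (g h x y)\<^sup>2 \<partial>M) + (real n - 1) * (\<integral>y. g h x y \<partial>M)\<^sup>2)"
      using n by (intro add_nonneg_nonneg mult_nonneg_nonneg) auto
    have on: "(of_nat n :: ennreal) = ennreal (real n)" by (rule ennreal_of_nat_eq_real_of_nat)
    show "of_nat n * ennreal (((\<integral>y. (g h x y)\<^sup>2 \<partial>M) + (real n - 1) * (\<integral>y. g h x y \<partial>M)\<^sup>2) / real n)
        = ennreal ((\<integral>y. (g h x y)\<^sup>2 \<partial>M) + (real n - 1) * (\<integral>y. g h x y \<partial>M)\<^sup>2)"
      apply (subst on)
      apply (subst ennreal_mult[symmetric])
      using n nn by auto
  qed
  finally show ?thesis .
qed

end



lemma (in prob_space) sq_exp_le: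
  fixes X :: "'a \<Rightarrow> real"
  assumes "integrable M X" "integrable M (\<lambda>x. (X x)\<^sup>2)"
  shows "(expectation X)\<^sup>2 \<le> expectation (\<lambda>x. (X x)\<^sup>2)"
  using variance_eq[OF assms] variance_positive[of X] by simp

lemma sq_half: "a\<^sup>2 / 2 \<le> (a - b)\<^sup>2 + (b::real)\<^sup>2"
proof -
  have "(a - b)\<^sup>2 + b\<^sup>2 - a\<^sup>2 / 2 = (a - 2 * b)\<^sup>2 / 2"
    by (simp add: power2_eq_square field_simps)
  moreover have "0 \<le> (a - 2 * b)\<^sup>2 / 2" by simp
  ultimately show ?thesis by linarith
qed

lemma half_ennreal: "0 \<le> a \<Longrightarrow> ennreal a / 2 = ennreal (a / 2)"
  by (metis divide_ennreal ennreal_numeral zero_less_numeral)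

context kset begin

definition m where "m h x = (\<integral>y. g h x y \<partial>M)"

lemma Kh_bnd: "0 < h \<Longrightarrow> \<bar>K ((x - y) / h) / h\<bar> \<le> B / h"
  using KB[of "(x - y) / h"] by (simp add: divide_right_mono)

lemma probU: "measure M UNIV = 1" using PM.prob_space by simp

lemma Kh_int: assumes h: "0 < h" shows "integrable M (\<lambda>y. K ((x - y) / h) / h)"
proof (rule PM.integrable_const_bound[where B="B/h"])
  show "AE y in M. norm (K ((x - y) / h) / h) \<le> B / h"
  proof (rule AE_I2)
    fix y show "norm (K ((x - y) / h) / h) \<le> B / h" using Kh_bnd[OF h, of x y] by (simp only: real_norm_def)
  qed
qed simp

lemma Kh2_int: assumes h: "0 < h" shows "integrable M (\<lambda>y. (K ((x - y) / h) / h)\<^sup>2)"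
proof (rule PM.integrable_const_bound[where B="(B/h)\<^sup>2"])
  show "AE y in M. norm ((K ((x - y) / h) / h)\<^sup>2) \<le> (B / h)\<^sup>2"
  proof (rule AE_I2)
    fix y
    have "\<bar>K ((x - y) / h) / h\<bar>\<^sup>2 \<le> (B / h)\<^sup>2" by (rule power_mono[OF Kh_bnd[OF h] abs_ge_zero])
    then show "norm ((K ((x - y) / h) / h)\<^sup>2) \<le> (B / h)\<^sup>2" by (simp only: real_norm_def abs_power2 power2_abs)
  qed
qed simp

lemma g_int: "0 < h \<Longrightarrow> integrable M (g h x)"
  unfolding g_def using Kh_int by simp

lemma g2_int: assumes h: "0 < h" shows "integrable M (\<lambda>y. (g h x y)\<^sup>2)"
proof (rule PM.integrable_const_bound[where B="(B/h + f x)\<^sup>2"])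
  show "AE y in M. norm ((g h x y)\<^sup>2) \<le> (B/h + f x)\<^sup>2"
  proof (rule AE_I2)
    fix y
    have "\<bar>g h x y\<bar>\<^sup>2 \<le> (B/h + f x)\<^sup>2" by (rule power_mono[OF g_bound[OF h] abs_ge_zero])
    then show "norm ((g h x y)\<^sup>2) \<le> (B/h + f x)\<^sup>2" by (simp only: real_norm_def abs_power2 power2_abs)
  qed
qed simp

lemma m_eq: "0 < h \<Longrightarrow> m h x = (\<integral>y. K ((x - y) / h) / h \<partial>M) - f x"
  unfolding m_def g_def using Kh_int by (simp add: probU)

lemma eK2: "0 < h \<Longrightarrow> ennreal (\<integral>y. (K ((x - y) / h) / h)\<^sup>2 \<partial>M) = (\<integral>\<^sup>+y. ennreal ((K ((x - y) / h) / h)\<^sup>2) \<partial>M)"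
  by (rule nn_integral_eq_integral[symmetric, OF Kh2_int]) auto

lemma A1:
  assumes n: "0 < n" and h: "0 < h"
  shows "ennreal (NK2 / (2 * h)) \<le> of_nat n * MISE n f K h + ennreal NF2"
proof -
  have pt: "(\<integral>\<^sup>+y. ennreal ((K ((x - y) / h) / h)\<^sup>2) \<partial>M) / 2
      \<le> ennreal ((\<integral>y. (g h x y)\<^sup>2 \<partial>M) + (real n - 1) * (\<integral>y. g h x y \<partial>M)\<^sup>2) + ennreal ((f x)\<^sup>2)" for x
  proof -
    have "(\<integral>y. (K ((x - y) / h) / h)\<^sup>2 / 2 \<partial>M) \<le> (\<integral>y. (g h x y)\<^sup>2 + (f x)\<^sup>2 \<partial>M)"
    proof (rule integral_mono)
      show "integrable M (\<lambda>y. (K ((x - y) / h) / h)\<^sup>2 / 2)" using Kh2_int[OF h] by simp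
      show "integrable M (\<lambda>y. (g h x y)\<^sup>2 + (f x)\<^sup>2)" using g2_int[OF h] by simp
      fix y
      show "(K ((x - y) / h) / h)\<^sup>2 / 2 \<le> (g h x y)\<^sup>2 + (f x)\<^sup>2"
        unfolding g_def by (rule sq_half)
    qed
    also have "\<dots> = (\<integral>y. (g h x y)\<^sup>2 \<partial>M) + (f x)\<^sup>2"
      using g2_int[OF h] by (simp add: probU)
    finally have a: "(\<integral>y. (K ((x - y) / h) / h)\<^sup>2 \<partial>M) / 2 \<le> (\<integral>y. (g h x y)\<^sup>2 \<partial>M) + (f x)\<^sup>2" by simp
    have b: "(\<integral>y. (g h x y)\<^sup>2 \<partial>M) + (f x)\<^sup>2 \<le> ((\<integral>y. (g h x y)\<^sup>2 \<partial>M) + (real n - 1) * (\<integral>y. g h x y \<partial>M)\<^sup>2) + (f x)\<^sup>2"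
      using n by simp
    have "(\<integral>\<^sup>+y. ennreal ((K ((x - y) / h) / h)\<^sup>2) \<partial>M) / 2 = ennreal ((\<integral>y. (K ((x - y) / h) / h)\<^sup>2 \<partial>M) / 2)"
      by (simp add: eK2[OF h, symmetric] half_ennreal)
    also have "\<dots> \<le> ennreal (((\<integral>y. (g h x y)\<^sup>2 \<partial>M) + (real n - 1) * (\<integral>y. g h x y \<partial>M)\<^sup>2) + (f x)\<^sup>2)"
      using a b by (intro ennreal_leI) linarith
    also have "\<dots> = ennreal ((\<integral>y. (g h x y)\<^sup>2 \<partial>M) + (real n - 1) * (\<integral>y. g h x y \<partial>M)\<^sup>2) + ennreal ((f x)\<^sup>2)"
      using n by (intro ennreal_plus) auto
    finally show ?thesis .
  qed
  have "ennreal (NK2 / (2 * h)) = (\<integral>\<^sup>+x. \<integral>\<^sup>+y. ennreal ((K ((x - y) / h) / h)\<^sup>2) \<partial>M \<partial>lborel) / 2"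
    using NK2_pos h by (simp add: KT half_ennreal)
  also have "\<dots> = (\<integral>\<^sup>+x. (\<integral>\<^sup>+y. ennreal ((K ((x - y) / h) / h)\<^sup>2) \<partial>M) / 2 \<partial>lborel)"
    by (simp add: nn_integral_divide)
  also have "\<dots> \<le> (\<integral>\<^sup>+x. ennreal ((\<integral>y. (g h x y)\<^sup>2 \<partial>M) + (real n - 1) * (\<integral>y. g h x y \<partial>M)\<^sup>2) + ennreal ((f x)\<^sup>2) \<partial>lborel)"
    by (rule nn_integral_mono) (rule pt)
  also have "\<dots> = (\<integral>\<^sup>+x. ennreal ((\<integral>y. (g h x y)\<^sup>2 \<partial>M) + (real n - 1) * (\<integral>y. g h x y \<partial>M)\<^sup>2) \<partial>lborel) + (\<integral>\<^sup>+x. ennreal ((f x)\<^sup>2) \<partial>lborel)"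
    by (rule nn_integral_add) auto
  also have "\<dots> = of_nat n * MISE n f K h + ennreal NF2"
    by (simp add: MISE_eq[OF n h] nnF2)
  finally show ?thesis .
qed

lemma A2:
  assumes n: "0 < n" and h: "0 < h"
  shows "of_nat n * (\<integral>\<^sup>+x. ennreal ((m h x)\<^sup>2) \<partial>lborel) \<le> of_nat n * MISE n f K h"
proof -
  have "of_nat n * (\<integral>\<^sup>+x. ennreal ((m h x)\<^sup>2) \<partial>lborel) = (\<integral>\<^sup>+x. of_nat n * ennreal ((m h x)\<^sup>2) \<partial>lborel)"
    by (rule nn_integral_cmult[symmetric]) (simp add: m_def)
  also have "\<dots> \<le> (\<integral>\<^sup>+x. ennreal ((\<integral>y. (g h x y)\<^sup>2 \<partial>M) + (real n - 1) * (\<integral>y. g h x y \<partial>M)\<^sup>2) \<partial>lborel)"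
  proof (rule nn_integral_mono)
    fix x
    have j: "(m h x)\<^sup>2 \<le> (\<integral>y. (g h x y)\<^sup>2 \<partial>M)"
      unfolding m_def by (rule PM.sq_exp_le[OF g_int[OF h] g2_int[OF h]])
    have "real n * (m h x)\<^sup>2 = (m h x)\<^sup>2 + (real n - 1) * (m h x)\<^sup>2" by (simp add: algebra_simps)
    also have "\<dots> \<le> ((\<integral>y. (g h x y)\<^sup>2 \<partial>M) + (real n - 1) * (\<integral>y. g h x y \<partial>M)\<^sup>2)"
      using j by (simp add: m_def)
    finally have "real n * (m h x)\<^sup>2 \<le> ((\<integral>y. (g h x y)\<^sup>2 \<partial>M) + (real n - 1) * (\<integral>y. g h x y \<partial>M)\<^sup>2)" .
    then have "ennreal (real n * (m h x)\<^sup>2) \<le> ennreal ((\<integral>y. (g h x y)\<^sup>2 \<partial>M) + (real n - 1) * (\<integral>y. g h x y \<partial>M)\<^sup>2)"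
      by (rule ennreal_leI)
    moreover have "of_nat n * ennreal ((m h x)\<^sup>2) = ennreal (real n * (m h x)\<^sup>2)"
      by (simp add: ennreal_mult ennreal_of_nat_eq_real_of_nat)
    ultimately show "of_nat n * ennreal ((m h x)\<^sup>2) \<le> ennreal ((\<integral>y. (g h x y)\<^sup>2 \<partial>M) + (real n - 1) * (\<integral>y. g h x y \<partial>M)\<^sup>2)"
      by simp
  qed
  also have "\<dots> = of_nat n * MISE n f K h" by (simp add: MISE_eq[OF n h])
  finally show ?thesis .
qed

lemma D1:
  assumes h: "0 < h"
  shows "ennreal (NF2 / 2) \<le> (\<integral>\<^sup>+x. ennreal ((m h x)\<^sup>2) \<partial>lborel) + ennreal (NK2 / h)"
proof -
  have pt: "ennreal ((f x)\<^sup>2 / 2) \<le> ennreal ((m h x)\<^sup>2) + (\<integral>\<^sup>+y. ennreal ((K ((x - y) / h) / h)\<^sup>2) \<partial>M)" for x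
  proof -
    let ?c = "\<integral>y. K ((x - y) / h) / h \<partial>M"
    have j: "?c\<^sup>2 \<le> (\<integral>y. (K ((x - y) / h) / h)\<^sup>2 \<partial>M)"
      by (rule PM.sq_exp_le[OF Kh_int[OF h] Kh2_int[OF h]])
    have "(f x)\<^sup>2 / 2 \<le> (m h x)\<^sup>2 + ?c\<^sup>2"
      unfolding m_eq[OF h] using sq_half[of "f x" ?c] by (simp add: power2_commute)
    then have "(f x)\<^sup>2 / 2 \<le> (m h x)\<^sup>2 + (\<integral>y. (K ((x - y) / h) / h)\<^sup>2 \<partial>M)" using j by linarith
    then have "ennreal ((f x)\<^sup>2 / 2) \<le> ennreal ((m h x)\<^sup>2 + (\<integral>y. (K ((x - y) / h) / h)\<^sup>2 \<partial>M))"
      by (rule ennreal_leI)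
    also have "\<dots> = ennreal ((m h x)\<^sup>2) + ennreal (\<integral>y. (K ((x - y) / h) / h)\<^sup>2 \<partial>M)"
      by (intro ennreal_plus) auto
    finally show ?thesis by (simp add: eK2[OF h])
  qed
  have "ennreal (NF2 / 2) = (\<integral>\<^sup>+x. ennreal ((f x)\<^sup>2 / 2) \<partial>lborel)"
  proof -
    have "(\<integral>\<^sup>+x. ennreal ((f x)\<^sup>2 / 2) \<partial>lborel) = (\<integral>\<^sup>+x. ennreal ((f x)\<^sup>2) / 2 \<partial>lborel)"
      by (simp add: half_ennreal)
    also have "\<dots> = ennreal NF2 / 2" by (simp add: nn_integral_divide nnF2)
    finally show ?thesis using NF2_pos by (simp add: half_ennreal)
  qed
  also have "\<dots> \<le> (\<integral>\<^sup>+x. ennreal ((m h x)\<^sup>2) + (\<integral>\<^sup>+y. ennreal ((K ((x - y) / h) / h)\<^sup>2) \<partial>M) \<partial>lborel)"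
    by (rule nn_integral_mono) (rule pt)
  also have "\<dots> = (\<integral>\<^sup>+x. ennreal ((m h x)\<^sup>2) \<partial>lborel) + (\<integral>\<^sup>+x. \<integral>\<^sup>+y. ennreal ((K ((x - y) / h) / h)\<^sup>2) \<partial>M \<partial>lborel)"
    by (rule nn_integral_add) (auto simp: m_def)
  also have "\<dots> = (\<integral>\<^sup>+x. ennreal ((m h x)\<^sup>2) \<partial>lborel) + ennreal (NK2 / h)"
    by (simp add: KT[OF h])
  finally show ?thesis .
qed

end



lemma cis_meas[measurable]: "cis \<in> borel_measurable borel"
  by (intro borel_measurable_continuous_onI continuous_intros)

context kset begin

definition NK1 where "NK1 = (\<integral>x. \<bar>K x\<bar> \<partial>lborel)"

lemma nnK1: "(\<integral>\<^sup>+x. ennreal \<bar>K x\<bar> \<partial>lborel) = ennreal NK1"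
  unfolding NK1_def by (rule nn_integral_eq_integral) (auto intro: Kint)

lemma nnKh1: assumes h: "0 < h"
  shows "(\<integral>\<^sup>+x. ennreal \<bar>K ((x - y) / h) / h\<bar> \<partial>lborel) = ennreal NK1"
proof -
  have "(\<integral>\<^sup>+x. ennreal \<bar>K ((x - y) / h) / h\<bar> \<partial>lborel)
     = ennreal \<bar>h\<bar> * (\<integral>\<^sup>+u. ennreal \<bar>K ((y + h * u - y) / h) / h\<bar> \<partial>lborel)"
    by (rule nn_integral_real_affine) (use h in auto)
  also have "\<dots> = ennreal h * (\<integral>\<^sup>+u. ennreal \<bar>K u\<bar> * ennreal (1 / h) \<partial>lborel)"
    using h by (simp add: ennreal_mult[symmetric] abs_divide del: ennreal_mult')
  also have "\<dots> = ennreal h * (ennreal NK1 * ennreal (1 / h))"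
    by (simp add: nn_integral_multc nnK1)
  also have "\<dots> = ennreal NK1"
    using h by (simp add: ennreal_mult[symmetric] NK1_def del: ennreal_mult')
  finally show ?thesis .
qed

definition c where "c h x = (\<integral>y. f y * (K ((x - y) / h) / h) \<partial>lborel)"

lemma m_c: "0 < h \<Longrightarrow> m h x = c h x - f x"
  by (simp add: m_eq integral_M c_def)

lemma pairF_int: assumes h: "0 < h"
  shows "integrable (lborel \<Otimes>\<^sub>M lborel) (\<lambda>(x, y). f y * (K ((x - y) / h) / h))"
proof (subst integrable_iff_bounded, intro conjI)
  show "(\<lambda>(x, y). f y * (K ((x - y) / h) / h)) \<in> borel_measurable (lborel \<Otimes>\<^sub>M lborel)"
    by measurable
  have "(\<integral>\<^sup>+p. ennreal (norm ((\<lambda>(x, y). f y * (K ((x - y) / h) / h)) p)) \<partial>(lborel \<Otimes>\<^sub>M lborel))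
      = (\<integral>\<^sup>+y. \<integral>\<^sup>+x. ennreal (norm (f y * (K ((x - y) / h) / h))) \<partial>lborel \<partial>lborel)"
    by (subst lborel_pair.nn_integral_snd[symmetric]) (auto simp: case_prod_beta)
  also have "\<dots> = (\<integral>\<^sup>+y. ennreal (f y) * ennreal NK1 \<partial>lborel)"
  proof (rule nn_integral_cong)
    fix y
    have "(\<integral>\<^sup>+x. ennreal (norm (f y * (K ((x - y) / h) / h))) \<partial>lborel)
        = (\<integral>\<^sup>+x. ennreal (f y) * ennreal \<bar>K ((x - y) / h) / h\<bar> \<partial>lborel)"
      apply (rule nn_integral_cong)
      using fnn[of y] by (subst ennreal_mult[symmetric]) (auto simp: abs_mult)
    also have "\<dots> = ennreal (f y) * ennreal NK1"
      using nnKh1[OF h, of y] by (simp add: nn_integral_cmult)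
    finally show "(\<integral>\<^sup>+x. ennreal (norm (f y * (K ((x - y) / h) / h))) \<partial>lborel) = ennreal (f y) * ennreal NK1" .
  qed
  also have "\<dots> = ennreal NK1" by (simp add: nn_integral_multc nn_f)
  finally show "(\<integral>\<^sup>+p. ennreal (norm ((\<lambda>(x, y). f y * (K ((x - y) / h) / h)) p)) \<partial>(lborel \<Otimes>\<^sub>M lborel)) < \<infinity>"
    by simp
qed

lemma c_int: "0 < h \<Longrightarrow> integrable lborel (c h)"
  unfolding c_def using lborel_pair.integrable_fst[OF pairF_int] by simp

lemma m_int: assumes h: "0 < h" shows "integrable lborel (m h)"
proof -
  have "m h = (\<lambda>x. c h x - f x)" using m_c[OF h] by auto
  then show ?thesis using c_int[OF h] fint by simp
qed

lemma pairH_int: assumes h: "0 < h"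
  shows "integrable (lborel \<Otimes>\<^sub>M lborel) (\<lambda>(x, y). cis (t * x) * complex_of_real (f y * (K ((x - y) / h) / h)))"
  by (rule Bochner_Integration.integrable_bound[OF integrable_norm[OF pairF_int[OF h]]])
     (auto simp: case_prod_beta norm_mult norm_divide abs_mult intro!: AE_I2)

lemma charK_shift: assumes h: "0 < h"
  shows "(\<integral>x. cis (t * x) * complex_of_real (K ((x - y) / h) / h) \<partial>lborel) = cis (t * y) * char_fun K (h * t)"
proof -
  have "(\<integral>x. cis (t * x) * complex_of_real (K ((x - y) / h) / h) \<partial>lborel)
      = \<bar>h\<bar> *\<^sub>R (\<integral>u. cis (t * (y + h * u)) * complex_of_real (K ((y + h * u - y) / h) / h) \<partial>lborel)"
    by (rule lborel_integral_real_affine) (use h in auto)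
  also have "\<dots> = h *\<^sub>R (\<integral>u. (cis (t * y) / complex_of_real h) * (cis (h * t * u) * complex_of_real (K u)) \<partial>lborel)"
    using h by (auto intro!: Bochner_Integration.integral_cong simp: cis_mult[symmetric] algebra_simps)
  also have "\<dots> = cis (t * y) * char_fun K (h * t)"
    using h by (simp add: char_fun_def scaleR_conv_of_real)
  finally show ?thesis .
qed

lemma E1: assumes h: "0 < h"
  shows "char_fun (m h) t = char_fun f t * (char_fun K (h * t) - 1)"
proof -
  have fi: "integrable lborel (\<lambda>x. cis (t * x) * complex_of_real (f x))"
    by (rule Bochner_Integration.integrable_bound[OF integrable_norm[OF fint]]) (auto simp: norm_mult)
  have ci: "integrable lborel (\<lambda>x. cis (t * x) * complex_of_real (c h x))"
    by (rule Bochner_Integration.integrable_bound[OF integrable_norm[OF c_int[OF h]]]) (auto simp: norm_mult norm_divide c_def intro!: AE_I2)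
  have "char_fun (m h) t = (\<integral>x. cis (t * x) * complex_of_real (c h x) \<partial>lborel) - char_fun f t"
    unfolding char_fun_def using fi ci by (simp add: m_c[OF h] algebra_simps)
  also have "(\<integral>x. cis (t * x) * complex_of_real (c h x) \<partial>lborel)
      = (\<integral>x. \<integral>y. cis (t * x) * complex_of_real (f y * (K ((x - y) / h) / h)) \<partial>lborel \<partial>lborel)"
    unfolding c_def by (simp add: integral_complex_of_real[symmetric])
  also have "\<dots> = (\<integral>y. \<integral>x. cis (t * x) * complex_of_real (f y * (K ((x - y) / h) / h)) \<partial>lborel \<partial>lborel)"
    by (rule lborel_pair.Fubini_integral[symmetric]) (rule pairH_int[OF h])
  also have "\<dots> = (\<integral>y. complex_of_real (f y) * (cis (t * y) * char_fun K (h * t)) \<partial>lborel)"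
  proof (rule Bochner_Integration.integral_cong[OF refl])
    fix y
    have "(\<integral>x. cis (t * x) * complex_of_real (f y * (K ((x - y) / h) / h)) \<partial>lborel)
        = (\<integral>x. complex_of_real (f y) * (cis (t * x) * complex_of_real (K ((x - y) / h) / h)) \<partial>lborel)"
      by (simp add: algebra_simps)
    also have "\<dots> = complex_of_real (f y) * (cis (t * y) * char_fun K (h * t))"
      using charK_shift[OF h, of t y] by (simp add: times_divide_eq_right[symmetric] del: times_divide_eq_right)
    finally show "(\<integral>x. cis (t * x) * complex_of_real (f y * (K ((x - y) / h) / h)) \<partial>lborel)
        = complex_of_real (f y) * (cis (t * y) * char_fun K (h * t))" .
  qed
  also have "\<dots> = char_fun f t * char_fun K (h * t)"
  proof -
    have "(\<lambda>y. complex_of_real (f y) * (cis (t * y) * char_fun K (h * t))) = (\<lambda>y. (cis (t * y) * complex_of_real (f y)) * char_fun K (h * t))"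
      by (auto simp: algebra_simps)
    then show ?thesis by (simp only: integral_mult_left_zero char_fun_def)
  qed
  finally show ?thesis by (simp add: algebra_simps)
qed

lemma char_bound: "ennreal (cmod (char_fun u t)) \<le> (\<integral>\<^sup>+x. ennreal \<bar>u x\<bar> \<partial>lborel)"
proof (cases "integrable lborel (\<lambda>x. cis (t * x) * complex_of_real (u x))")
  case True
  have "ennreal (cmod (char_fun u t)) \<le> (\<integral>\<^sup>+x. ennreal (norm (cis (t * x) * complex_of_real (u x))) \<partial>lborel)"
    unfolding char_fun_def by (rule integral_norm_bound_ennreal[OF True])
  then show ?thesis by (simp add: norm_mult)
next
  case False
  then show ?thesis by (simp add: char_fun_def not_integrable_integral_eq)
qed

end



lemma sq_bound_lam: fixes l b :: real assumes l: "0 < l" shows "\<bar>b\<bar> \<le> l / 2 * b\<^sup>2 + 1 / (2 * l)"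
proof -
  have "l / 2 * b\<^sup>2 + 1 / (2 * l) - \<bar>b\<bar> = (l * \<bar>b\<bar> - 1)\<^sup>2 / (2 * l)"
    using l by (simp add: power2_eq_square field_simps)
  moreover have "0 \<le> (l * \<bar>b\<bar> - 1)\<^sup>2 / (2 * l)" using l by simp
  ultimately show ?thesis by linarith
qed

lemma local_bound:
  fixes b :: "real \<Rightarrow> real"
  assumes l: "0 < l" and R: "0 \<le> R" and [measurable]: "b \<in> borel_measurable borel"
  shows "(\<integral>\<^sup>+x. ennreal \<bar>b x\<bar> * indicator {-R..R} x \<partial>lborel)
     \<le> ennreal (l / 2) * (\<integral>\<^sup>+x. ennreal ((b x)\<^sup>2) \<partial>lborel) + ennreal (R / l)"
proof -
  have "(\<integral>\<^sup>+x. ennreal \<bar>b x\<bar> * indicator {-R..R} x \<partial>lborel)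
      \<le> (\<integral>\<^sup>+x. ennreal (l / 2) * ennreal ((b x)\<^sup>2) + ennreal (1 / (2 * l)) * indicator {-R..R} x \<partial>lborel)"
  proof (rule nn_integral_mono)
    fix x
    have "ennreal \<bar>b x\<bar> \<le> ennreal (l / 2 * (b x)\<^sup>2 + 1 / (2 * l))"
      by (rule ennreal_leI) (rule sq_bound_lam[OF l])
    also have "\<dots> = ennreal (l / 2 * (b x)\<^sup>2) + ennreal (1 / (2 * l))"
      by (rule ennreal_plus) (use l in auto)
    also have "ennreal (l / 2 * (b x)\<^sup>2) = ennreal (l / 2) * ennreal ((b x)\<^sup>2)"
      by (rule ennreal_mult) (use l in auto)
    finally have a: "ennreal \<bar>b x\<bar> \<le> ennreal (l / 2) * ennreal ((b x)\<^sup>2) + ennreal (1 / (2 * l))" .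
    show "ennreal \<bar>b x\<bar> * indicator {-R..R} x \<le> ennreal (l / 2) * ennreal ((b x)\<^sup>2) + ennreal (1 / (2 * l)) * indicator {-R..R} x"
      using a by (cases "x \<in> {-R..R}") auto
  qed
  also have "\<dots> = ennreal (l / 2) * (\<integral>\<^sup>+x. ennreal ((b x)\<^sup>2) \<partial>lborel) + ennreal (1 / (2 * l)) * emeasure lborel {-R..R}"
    by (subst nn_integral_add) (auto simp: nn_integral_cmult nn_integral_cmult_indicator)
  also have "ennreal (1 / (2 * l)) * emeasure lborel {-R..R} = ennreal (R / l)"
    using l R by (simp add: ennreal_mult[symmetric] del: ennreal_mult')
  finally show ?thesis .
qed

context kset begin

definition TF where "TF R = (\<integral>\<^sup>+x. ennreal (f x) * indicator {x. R < \<bar>x\<bar>} x \<partial>lborel)"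
definition TT where "TT H R = (\<integral>\<^sup>+y. \<integral>\<^sup>+u. ennreal (f y * \<bar>K u\<bar>) * indicator {u. R < \<bar>y\<bar> + H * \<bar>u\<bar>} u \<partial>lborel \<partial>lborel)"

lemma m_meas[measurable]: "0 < h \<Longrightarrow> m h \<in> borel_measurable borel"
  using borel_measurable_integrable[OF m_int] by simp

lemma c_abs_bound: "0 < h \<Longrightarrow> ennreal \<bar>c h x\<bar> \<le> (\<integral>\<^sup>+y. ennreal (f y * \<bar>K ((x - y) / h) / h\<bar>) \<partial>lborel)"
proof (cases "integrable lborel (\<lambda>y. f y * (K ((x - y) / h) / h))")
  case True
  have "ennreal (norm (c h x)) \<le> (\<integral>\<^sup>+y. ennreal (norm (f y * (K ((x - y) / h) / h))) \<partial>lborel)"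
    unfolding c_def by (rule integral_norm_bound_ennreal[OF True])
  then show ?thesis using fnn by (simp add: abs_mult)
next
  case False
  then show ?thesis by (simp only: c_def not_integrable_integral_eq[OF False]) simp
qed

lemma m_abs_bound: "0 < h \<Longrightarrow> ennreal \<bar>m h x\<bar> \<le> (\<integral>\<^sup>+y. ennreal (f y * \<bar>K ((x - y) / h) / h\<bar>) \<partial>lborel) + ennreal (f x)"
proof -
  assume h: "0 < h"
  have "ennreal \<bar>m h x\<bar> \<le> ennreal (\<bar>c h x\<bar> + f x)"
    using fnn[of x] by (intro ennreal_leI) (simp add: m_c[OF h])
  also have "\<dots> = ennreal \<bar>c h x\<bar> + ennreal (f x)" using fnn[of x] by (simp add: ennreal_plus)
  also have "\<dots> \<le> (\<integral>\<^sup>+y. ennreal (f y * \<bar>K ((x - y) / h) / h\<bar>) \<partial>lborel) + ennreal (f x)"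
    by (intro add_mono c_abs_bound[OF h]) simp
  finally show ?thesis .
qed

lemma tail_bound:
  assumes h: "0 < h" "h \<le> H"
  shows "(\<integral>\<^sup>+x. ennreal \<bar>m h x\<bar> * indicator {x. R < \<bar>x\<bar>} x \<partial>lborel) \<le> TT H R + TF R"
proof -
  have "(\<integral>\<^sup>+x. ennreal \<bar>m h x\<bar> * indicator {x. R < \<bar>x\<bar>} x \<partial>lborel)
    \<le> (\<integral>\<^sup>+x. (\<integral>\<^sup>+y. ennreal (f y * \<bar>K ((x - y) / h) / h\<bar>) * indicator {x. R < \<bar>x\<bar>} x \<partial>lborel)
           + ennreal (f x) * indicator {x. R < \<bar>x\<bar>} x \<partial>lborel)"
  proof (rule nn_integral_mono)
    fix x
    show "ennreal \<bar>m h x\<bar> * indicator {x. R < \<bar>x\<bar>} x \<le> (\<integral>\<^sup>+y. ennreal (f y * \<bar>K ((x - y) / h) / h\<bar>) * indicator {x. R < \<bar>x\<bar>} x \<partial>lborel)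
           + ennreal (f x) * indicator {x. R < \<bar>x\<bar>} x"
      using m_abs_bound[OF h(1), of x] by (cases "R < \<bar>x\<bar>") auto
  qed
  also have "\<dots> = (\<integral>\<^sup>+x. \<integral>\<^sup>+y. ennreal (f y * \<bar>K ((x - y) / h) / h\<bar>) * indicator {x. R < \<bar>x\<bar>} x \<partial>lborel \<partial>lborel) + TF R"
    unfolding TF_def by (rule nn_integral_add) auto
  also have "(\<integral>\<^sup>+x. \<integral>\<^sup>+y. ennreal (f y * \<bar>K ((x - y) / h) / h\<bar>) * indicator {x. R < \<bar>x\<bar>} x \<partial>lborel \<partial>lborel)
      = (\<integral>\<^sup>+y. \<integral>\<^sup>+x. ennreal (f y * \<bar>K ((x - y) / h) / h\<bar>) * indicator {x. R < \<bar>x\<bar>} x \<partial>lborel \<partial>lborel)"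
    by (rule lborel_pair.Fubini'[symmetric]) simp
  also have "\<dots> \<le> TT H R"
    unfolding TT_def
  proof (rule nn_integral_mono)
    fix y
    have "(\<integral>\<^sup>+x. ennreal (f y * \<bar>K ((x - y) / h) / h\<bar>) * indicator {x. R < \<bar>x\<bar>} x \<partial>lborel)
        = ennreal \<bar>h\<bar> * (\<integral>\<^sup>+u. ennreal (f y * \<bar>K ((y + h * u - y) / h) / h\<bar>) * indicator {x. R < \<bar>x\<bar>} (y + h * u) \<partial>lborel)"
      by (rule nn_integral_real_affine) (use h in auto)
    also have "\<dots> = (\<integral>\<^sup>+u. ennreal h * (ennreal (f y * \<bar>K u\<bar> / h) * indicator {x. R < \<bar>x\<bar>} (y + h * u)) \<partial>lborel)"
      using h by (subst nn_integral_cmult) (auto simp: abs_mult)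
    also have "\<dots> \<le> (\<integral>\<^sup>+u. ennreal (f y * \<bar>K u\<bar>) * indicator {u. R < \<bar>y\<bar> + H * \<bar>u\<bar>} u \<partial>lborel)"
    proof (rule nn_integral_mono)
      fix u
      have e: "ennreal h * ennreal (f y * \<bar>K u\<bar> / h) = ennreal (f y * \<bar>K u\<bar>)"
        using h fnn[of y] by (simp add: ennreal_mult[symmetric] del: ennreal_mult')
      have "\<bar>y + h * u\<bar> \<le> \<bar>y\<bar> + H * \<bar>u\<bar>"
      proof -
        have "\<bar>y + h * u\<bar> \<le> \<bar>y\<bar> + h * \<bar>u\<bar>" using h by (simp add: abs_triangle_ineq[THEN order_trans] abs_mult)
        also have "\<dots> \<le> \<bar>y\<bar> + H * \<bar>u\<bar>" using h by (simp add: mult_right_mono)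
        finally show ?thesis .
      qed
      then have "indicator {x. R < \<bar>x\<bar>} (y + h * u) \<le> (indicator {u. R < \<bar>y\<bar> + H * \<bar>u\<bar>} u :: ennreal)"
        by (auto simp: indicator_def)
      then have "ennreal (f y * \<bar>K u\<bar>) * indicator {x. R < \<bar>x\<bar>} (y + h * u) \<le> ennreal (f y * \<bar>K u\<bar>) * indicator {u. R < \<bar>y\<bar> + H * \<bar>u\<bar>} u"
        by (rule mult_left_mono) simp
      then show "ennreal h * (ennreal (f y * \<bar>K u\<bar> / h) * indicator {x. R < \<bar>x\<bar>} (y + h * u)) \<le> ennreal (f y * \<bar>K u\<bar>) * indicator {u. R < \<bar>y\<bar> + H * \<bar>u\<bar>} u"
        by (simp add: mult.assoc[symmetric] e)
    qed
    finally show "(\<integral>\<^sup>+x. ennreal (f y * \<bar>K ((x - y) / h) / h\<bar>) * indicator {x. R < \<bar>x\<bar>} x \<partial>lborel)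
        \<le> (\<integral>\<^sup>+u. ennreal (f y * \<bar>K u\<bar>) * indicator {u. R < \<bar>y\<bar> + H * \<bar>u\<bar>} u \<partial>lborel)" .
  qed
  finally show ?thesis by (simp add: add_mono)
qed

end



lemma ennreal_sub_le: assumes b: "0 \<le> b" and le: "ennreal a \<le> X + ennreal b" shows "ennreal (a - b) \<le> X"
proof (cases X)
  case (real x)
  then have "ennreal a \<le> ennreal (x + b)" using le b by (simp add: ennreal_plus)
  then have "a \<le> x + b" using real b by (subst (asm) ennreal_le_iff) auto
  then show ?thesis by (subst real(2)) (rule ennreal_leI, simp)
next
  case top then show ?thesis by simp
qed

lemma pair_nn: "F \<in> borel_measurable (lborel \<Otimes>\<^sub>M lborel) \<Longrightarrow>
  (\<integral>\<^sup>+x. \<integral>\<^sup>+y. F (x, y) \<partial>lborel \<partial>lborel) = (\<integral>\<^sup>+p. F p \<partial>(lborel \<Otimes>\<^sub>M lborel))"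
  by (rule sigma_finite_measure.nn_integral_fst[OF lborel.sigma_finite_measure_axioms])

context kset begin

lemma TF_mono: "R \<le> R' \<Longrightarrow> TF R' \<le> TF R"
  unfolding TF_def by (intro nn_integral_mono mult_left_mono) (auto simp: indicator_def)

lemma TT_mono: "R \<le> R' \<Longrightarrow> TT H R' \<le> TT H R"
  unfolding TT_def by (intro nn_integral_mono mult_left_mono) (auto simp: indicator_def)

lemma TF_INF: "(INF k. TF (real (Suc k))) = 0"
proof -
  let ?F = "\<lambda>k x. ennreal (f x) * indicator {x. real (Suc k) < \<bar>x\<bar>} x"
  have dec: "decseq ?F"
    by (rule decseq_SucI) (auto intro!: mult_left_mono simp: le_fun_def indicator_def)
  have fin: "(\<integral>\<^sup>+x. ?F k x \<partial>lborel) < \<infinity>" for k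
  proof -
    have "(\<integral>\<^sup>+x. ?F k x \<partial>lborel) \<le> (\<integral>\<^sup>+x. ennreal (f x) \<partial>lborel)"
      by (intro nn_integral_mono) (auto simp: indicator_def)
    also have "\<dots> = 1" by (rule nn_f)
    also have "(1::ennreal) < \<infinity>" by simp
    finally show ?thesis .
  qed
  have z: "(INF k. ?F k x) = 0" for x
  proof -
    have "(INF k. ?F k x) \<le> ?F (nat \<lceil>\<bar>x\<bar>\<rceil>) x" by (rule INF_lower) simp
    also have "\<dots> = 0"
    proof -
      have "\<not> real (Suc (nat \<lceil>\<bar>x\<bar>\<rceil>)) < \<bar>x\<bar>" by linarith
      then show ?thesis by simp
    qed
    finally show ?thesis by simp
  qed
  have eq: "(\<integral>\<^sup>+x. (INF k. ?F k x) \<partial>lborel) = (INF k. \<integral>\<^sup>+x. ?F k x \<partial>lborel)"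
    apply (rule nn_integral_monotone_convergence_INF_decseq[OF dec])
    subgoal by measurable
    subgoal by (rule fin)
    done
  have "(INF k. TF (real (Suc k))) = (INF k. \<integral>\<^sup>+x. ?F k x \<partial>lborel)" by (simp only: TF_def)
  also have "\<dots> = (\<integral>\<^sup>+x. (INF k. ?F k x) \<partial>lborel)" by (rule eq[symmetric])
  also have "\<dots> = 0" by (simp only: z) simp
  finally show ?thesis .
qed

lemma TT_pair: "TT H R = (\<integral>\<^sup>+p. ennreal (f (fst p) * \<bar>K (snd p)\<bar>) * indicator {u. R < \<bar>fst p\<bar> + H * \<bar>u\<bar>} (snd p) \<partial>(lborel \<Otimes>\<^sub>M lborel))"
proof -
  have [measurable]: "(\<lambda>p. ennreal (f (fst p) * \<bar>K (snd p)\<bar>) * indicator {u. R < \<bar>fst p\<bar> + H * \<bar>u\<bar>} (snd p)) \<in> borel_measurable (lborel \<Otimes>\<^sub>M lborel)"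
    by measurable
  show ?thesis unfolding TT_def
    using pair_nn[of "\<lambda>p. ennreal (f (fst p) * \<bar>K (snd p)\<bar>) * indicator {u. R < \<bar>fst p\<bar> + H * \<bar>u\<bar>} (snd p)"] by simp
qed

lemma TT_INF: "(INF k. TT H (real (Suc k))) = 0"
proof -
  let ?F = "\<lambda>k p. ennreal (f (fst p) * \<bar>K (snd p)\<bar>) * indicator {u. real (Suc k) < \<bar>fst p\<bar> + H * \<bar>u\<bar>} (snd p)"
  have dec: "decseq ?F"
    by (rule decseq_SucI) (auto intro!: mult_left_mono simp: le_fun_def indicator_def)
  have fin: "(\<integral>\<^sup>+p. ?F k p \<partial>(lborel \<Otimes>\<^sub>M lborel)) < \<infinity>" for k
  proof -
    have "(\<integral>\<^sup>+p. ?F k p \<partial>(lborel \<Otimes>\<^sub>M lborel)) \<le> (\<integral>\<^sup>+p. ennreal (f (fst p) * \<bar>K (snd p)\<bar>) \<partial>(lborel \<Otimes>\<^sub>M lborel))"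
      by (intro nn_integral_mono) (auto simp: indicator_def)
    also have "\<dots> = (\<integral>\<^sup>+y. \<integral>\<^sup>+u. ennreal (f y) * ennreal \<bar>K u\<bar> \<partial>lborel \<partial>lborel)"
      using pair_nn[of "\<lambda>p. ennreal (f (fst p) * \<bar>K (snd p)\<bar>)"] by (simp add: ennreal_mult fnn)
    also have "\<dots> = ennreal NK1"
      by (simp add: nn_integral_cmult nnK1 nn_integral_multc nn_f)
    finally show ?thesis by (simp add: order_le_less_trans)
  qed
  have z: "(INF k. ?F k p) = 0" for p
  proof -
    have "(INF k. ?F k p) \<le> ?F (nat \<lceil>\<bar>fst p\<bar> + H * \<bar>snd p\<bar>\<rceil>) p" by (rule INF_lower) simp
    also have "\<dots> = 0"
    proof -
      have "\<not> real (Suc (nat \<lceil>\<bar>fst p\<bar> + H * \<bar>snd p\<bar>\<rceil>)) < \<bar>fst p\<bar> + H * \<bar>snd p\<bar>" by linarith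
      then show ?thesis by simp
    qed
    finally show ?thesis by simp
  qed
  have eq: "(\<integral>\<^sup>+p. (INF k. ?F k p) \<partial>(lborel \<Otimes>\<^sub>M lborel)) = (INF k. \<integral>\<^sup>+p. ?F k p \<partial>(lborel \<Otimes>\<^sub>M lborel))"
    apply (rule nn_integral_monotone_convergence_INF_decseq[OF dec])
    subgoal by measurable
    subgoal by (rule fin)
    done
  have "(INF k. TT H (real (Suc k))) = (INF k. \<integral>\<^sup>+p. ?F k p \<partial>(lborel \<Otimes>\<^sub>M lborel))" by (simp only: TT_pair)
  also have "\<dots> = (\<integral>\<^sup>+p. (INF k. ?F k p) \<partial>(lborel \<Otimes>\<^sub>M lborel))" by (rule eq[symmetric])
  also have "\<dots> = 0" by (simp only: z) simp
  finally show ?thesis .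
qed

lemma T_small: assumes e: "0 < e" shows "\<exists>R>0. TT H R + TF R < ennreal e"
proof -
  have "(INF k. TF (real (Suc k))) < ennreal (e / 3)" unfolding TF_INF using e by simp
  then obtain k1 where k1: "TF (real (Suc k1)) < ennreal (e / 3)" by (auto simp: INF_less_iff)
  have "(INF k. TT H (real (Suc k))) < ennreal (e / 3)" unfolding TT_INF using e by simp
  then obtain k2 where k2: "TT H (real (Suc k2)) < ennreal (e / 3)" by (auto simp: INF_less_iff)
  let ?R = "real (Suc (max k1 k2))"
  have a: "TF ?R \<le> ennreal (e / 3)" using TF_mono[of "real (Suc k1)" ?R] k1 by simp
  have b: "TT H ?R \<le> ennreal (e / 3)" using TT_mono[of "real (Suc k2)" ?R H] k2 by simp
  have "TT H ?R + TF ?R \<le> ennreal (e / 3) + ennreal (e / 3)" by (rule add_mono[OF b a])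
  also have "\<dots> = ennreal (2 * e / 3)" using e by (simp add: ennreal_plus[symmetric] del: ennreal_plus)
  also have "\<dots> < ennreal e" using e by (simp add: ennreal_lessI)
  finally show ?thesis by (intro exI[of _ ?R]) simp
qed

lemma real_dist_M: "real_distribution M"
  by (simp add: real_distribution_def real_distribution_axioms_def prob_M sets_M)

lemma char_fun_f: "char_fun f t = char M t"
proof -
  have "char M t = (\<integral>x. f x *\<^sub>R iexp (t * x) \<partial>lborel)"
    unfolding char_def M_def by (subst integral_density) (auto simp: fnn)
  also have "\<dots> = char_fun f t"
    unfolding char_fun_def by (simp add: scaleR_conv_of_real cis_conv_exp mult.commute)
  finally show ?thesis by simp
qed

lemma phi_f_near0: "\<exists>r>0. \<forall>u. \<bar>u\<bar> \<le> r \<longrightarrow> 1 / 2 \<le> cmod (char_fun f u)"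
proof -
  interpret RD: real_distribution M by (rule real_dist_M)
  have "isCont (char M) 0" by (rule RD.isCont_char)
  then obtain d where d: "0 < d" "\<And>x. dist x 0 < d \<Longrightarrow> dist (char M x) (char M 0) < 1 / 2"
    unfolding continuous_at_eps_delta by (metis zero_less_divide_1_iff zero_less_numeral)
  have "1 / 2 \<le> cmod (char_fun f u)" if "\<bar>u\<bar> \<le> d / 2" for u
  proof -
    have "dist (char M u) 1 < 1 / 2" using d(2)[of u] that d(1) RD.char_zero by simp
    then have "cmod (char M u - 1) < 1 / 2" by (simp add: dist_norm)
    moreover have "1 \<le> cmod (char M u) + cmod (char M u - 1)"
      using norm_triangle_ineq4[of "char M u" "char M u - 1"] by simp
    ultimately show ?thesis by (simp add: char_fun_f)
  qed
  then show ?thesis using d(1) by (intro exI[of _ "d/2"]) auto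
qed

end



context kset begin

lemma psi_all: assumes a: "\<forall>t\<ge>0. char_fun K t = 1" shows "char_fun K t = 1"
proof (cases "0 \<le> t")
  case True then show ?thesis using a by simp
next
  case False
  have "char_fun K t = (\<integral>x. cnj (cis (- t * x) * complex_of_real (K x)) \<partial>lborel)"
    unfolding char_fun_def by (simp add: cis_cnj)
  also have "\<dots> = cnj (char_fun K (- t))"
    unfolding char_fun_def by (rule Bochner_Integration.integral_cnj)
  also have "\<dots> = 1" using a False by simp
  finally show ?thesis .
qed

lemma gauss_eq: assumes a: "\<And>t. char_fun K t = 1"
  shows "(\<integral>x. K x * exp (- ((s * x)\<^sup>2) / 2) \<partial>lborel) = 1"
proof -
  let ?N = std_normal_distribution
  interpret RD: real_distribution ?N by (rule real_dist_normal_dist)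
  interpret PS: pair_sigma_finite ?N lborel
    by (simp add: pair_sigma_finite_def RD.sigma_finite_measure_axioms lborel.sigma_finite_measure_axioms)
  have Kp: "integrable (?N \<Otimes>\<^sub>M lborel) (\<lambda>p. K (snd p))"
  proof (subst integrable_iff_bounded, intro conjI)
    show "(\<lambda>p. K (snd p)) \<in> borel_measurable (?N \<Otimes>\<^sub>M lborel)" by measurable
    have "(\<integral>\<^sup>+p. ennreal (norm (K (snd p))) \<partial>(?N \<Otimes>\<^sub>M lborel)) = (\<integral>\<^sup>+t. \<integral>\<^sup>+x. ennreal \<bar>K x\<bar> \<partial>lborel \<partial>?N)"
      by (subst lborel.nn_integral_fst[symmetric]) auto
    also have "\<dots> = ennreal NK1" using RD.emeasure_space_1 by (simp add: nnK1)
    finally show "(\<integral>\<^sup>+p. ennreal (norm (K (snd p))) \<partial>(?N \<Otimes>\<^sub>M lborel)) < \<infinity>" by simp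
  qed
  have Fi: "integrable (?N \<Otimes>\<^sub>M lborel) (\<lambda>(t, x). cis (s * t * x) * complex_of_real (K x))"
    by (rule Bochner_Integration.integrable_bound[OF integrable_norm[OF Kp]]) (auto simp: case_prod_beta norm_mult)
  have "(\<integral>x. (\<integral>t. cis (s * t * x) * complex_of_real (K x) \<partial>?N) \<partial>lborel)
      = (\<integral>t. (\<integral>x. cis (s * t * x) * complex_of_real (K x) \<partial>lborel) \<partial>?N)"
    by (rule PS.Fubini_integral[OF Fi])
  also have "\<dots> = (\<integral>t. 1 \<partial>?N)"
  proof (rule Bochner_Integration.integral_cong[OF refl])
    fix t
    show "(\<integral>x. cis (s * t * x) * complex_of_real (K x) \<partial>lborel) = 1"
      using a[of "s * t"] by (simp add: char_fun_def)
  qed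
  also have "\<dots> = 1" using RD.prob_space by simp
  finally have e1: "(\<integral>x. (\<integral>t. cis (s * t * x) * complex_of_real (K x) \<partial>?N) \<partial>lborel) = 1" .
  have eqc: "(\<integral>x. (\<integral>t. cis (s * t * x) * complex_of_real (K x) \<partial>?N) \<partial>lborel)
      = (\<integral>x. complex_of_real (K x * exp (- ((s * x)\<^sup>2) / 2)) \<partial>lborel)"
  proof (rule Bochner_Integration.integral_cong[OF refl])
    fix x
    have "(\<integral>t. cis (s * t * x) * complex_of_real (K x) \<partial>?N) = (\<integral>t. iexp ((s * x) * t) \<partial>?N) * complex_of_real (K x)"
      by (simp add: cis_conv_exp mult_ac)
    also have "\<dots> = char ?N (s * x) * complex_of_real (K x)" by (simp add: char_def)
    also have "\<dots> = complex_of_real (K x * exp (- ((s * x)\<^sup>2) / 2))"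
      by (simp add: char_std_normal_distribution)
    finally show "(\<integral>t. cis (s * t * x) * complex_of_real (K x) \<partial>?N) = complex_of_real (K x * exp (- ((s * x)\<^sup>2) / 2))" .
  qed
  have "complex_of_real (\<integral>x. K x * exp (- ((s * x)\<^sup>2) / 2) \<partial>lborel) = (\<integral>x. complex_of_real (K x * exp (- ((s * x)\<^sup>2) / 2)) \<partial>lborel)"
    by (rule integral_complex_of_real[symmetric])
  also have "\<dots> = 1" using eqc e1 by simp
  finally have "complex_of_real (\<integral>x. K x * exp (- ((s * x)\<^sup>2) / 2) \<partial>lborel) = 1" .
  then show ?thesis by (simp add: complex_eq_iff)
qed

lemma psi_not_one: "\<exists>t\<ge>0. char_fun K t \<noteq> 1"
proof (rule ccontr)
  assume "\<not> (\<exists>t\<ge>0. char_fun K t \<noteq> 1)"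
  then have a: "\<And>t. char_fun K t = 1" using psi_all by auto
  let ?s = "\<lambda>k x. K x * exp (- ((real (Suc k) * x)\<^sup>2) / 2)"
  have one: "(\<lambda>k. \<integral>x. ?s k x \<partial>lborel) \<longlonglongrightarrow> 1"
    using gauss_eq[OF a] by simp
  have m1: "(\<lambda>x. 0::real) \<in> borel_measurable lborel" by simp
  have m2: "\<And>k. ?s k \<in> borel_measurable lborel" by measurable
  have wi: "integrable lborel (\<lambda>x. \<bar>K x\<bar>)" using Kint by simp
  have bnd: "\<And>k. AE x in lborel. norm (?s k x) \<le> \<bar>K x\<bar>"
    by (rule AE_I2) (simp add: abs_mult mult_left_le)
  have lim: "AE x in lborel. (\<lambda>k. ?s k x) \<longlonglongrightarrow> 0"
      using AE_lborel_singleton[of 0]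
    proof eventually_elim
      case (elim x)
      have x2: "0 < x\<^sup>2 / 2" using elim by simp
      have lin: "filterlim (\<lambda>k. real (Suc k) * (x\<^sup>2 / 2)) at_top sequentially"
        by (rule filterlim_at_top_mult_tendsto_pos[OF tendsto_const x2 filterlim_compose[OF filterlim_real_sequentially filterlim_Suc]])
      have "filterlim (\<lambda>k. (real (Suc k) * x)\<^sup>2 / 2) at_top sequentially"
      proof (rule filterlim_at_top_mono[OF lin], rule always_eventually, rule allI)
        fix k
        have "real (Suc k) \<le> (real (Suc k))\<^sup>2" by (simp add: power2_eq_square)
        then have "real (Suc k) * (x\<^sup>2 / 2) \<le> (real (Suc k))\<^sup>2 * (x\<^sup>2 / 2)"
          by (rule mult_right_mono) simp
        then show "real (Suc k) * (x\<^sup>2 / 2) \<le> (real (Suc k) * x)\<^sup>2 / 2"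
          by (simp add: power_mult_distrib)
      qed
      then have "filterlim (\<lambda>k. - ((real (Suc k) * x)\<^sup>2) / 2) at_bot sequentially"
        by (simp add: filterlim_uminus_at_bot)
      then have "(\<lambda>k. exp (- ((real (Suc k) * x)\<^sup>2) / 2)) \<longlonglongrightarrow> 0"
        by (rule filterlim_compose[OF exp_at_bot])
      then show ?case by (rule tendsto_mult_right_zero)
    qed
  have zero: "(\<lambda>k. \<integral>x. ?s k x \<partial>lborel) \<longlonglongrightarrow> (\<integral>x. 0 \<partial>lborel)"
    using Bochner_Integration.integral_dominated_convergence[OF m1 m2 wi lim bnd] by simp
  from LIMSEQ_unique[OF one zero] show False by simp
qed

end



context kset begin

lemma psi0: "char_fun K 0 = 1"
  unfolding char_fun_def using Kone by (simp add: integral_complex_of_real)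

lemma small_s: assumes e: "0 < e" shows "\<exists>s. 0 < s \<and> s < e \<and> char_fun K s \<noteq> 1"
proof -
  let ?A = "{t. 0 \<le> t \<and> cmod (char_fun K t - 1) \<noteq> 0}"
  have ne: "?A \<noteq> {}" using psi_not_one by auto
  have bb: "bdd_below ?A" by (rule bdd_belowI[of _ 0]) auto
  have "Inf ?A < e" using SK e by (simp add: S_K_def)
  then obtain s where s: "s \<in> ?A" "s < e" using cInf_less_iff[OF ne bb] by auto
  have "s \<noteq> 0" using s(1) psi0 by auto
  then show ?thesis using s by (intro exI[of _ s]) auto
qed

lemma split_abs: assumes h: "0 < h"
  shows "(\<integral>\<^sup>+x. ennreal \<bar>m h x\<bar> \<partial>lborel) = (\<integral>\<^sup>+x. ennreal \<bar>m h x\<bar> * indicator {-R..R} x \<partial>lborel) + (\<integral>\<^sup>+x. ennreal \<bar>m h x\<bar> * indicator {x. R < \<bar>x\<bar>} x \<partial>lborel)"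
proof -
  have "(\<integral>\<^sup>+x. ennreal \<bar>m h x\<bar> \<partial>lborel) = (\<integral>\<^sup>+x. ennreal \<bar>m h x\<bar> * indicator {-R..R} x + ennreal \<bar>m h x\<bar> * indicator {x. R < \<bar>x\<bar>} x \<partial>lborel)"
    by (rule nn_integral_cong) (auto simp: indicator_def)
  also have "\<dots> = (\<integral>\<^sup>+x. ennreal \<bar>m h x\<bar> * indicator {-R..R} x \<partial>lborel) + (\<integral>\<^sup>+x. ennreal \<bar>m h x\<bar> * indicator {x. R < \<bar>x\<bar>} x \<partial>lborel)"
    using m_meas[OF h] by (intro nn_integral_add) auto
  finally show ?thesis .
qed

lemma D2: assumes d: "0 < \<delta>" "\<delta> \<le> H"
  shows "\<exists>c>0. \<forall>h. \<delta> \<le> h \<and> h \<le> H \<longrightarrow> ennreal c \<le> (\<integral>\<^sup>+x. ennreal ((m h x)\<^sup>2) \<partial>lborel)"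
proof -
  obtain r where r: "0 < r" "\<And>u. \<bar>u\<bar> \<le> r \<Longrightarrow> 1 / 2 \<le> cmod (char_fun f u)"
    using phi_f_near0 by blast
  obtain s where s: "0 < s" "s < r * \<delta>" "char_fun K s \<noteq> 1"
    using small_s[of "r * \<delta>"] r(1) d(1) by auto
  define \<eta> where "\<eta> = cmod (char_fun K s - 1) / 2"
  have eta: "0 < \<eta>" using s(3) by (simp add: \<eta>_def)
  obtain R where R: "0 < R" "TT H R + TF R < ennreal (\<eta> / 3)"
    using T_small[of "\<eta> / 3" H] eta by auto
  define l where "l = 3 * R / \<eta>"
  have l: "0 < l" using R eta by (simp add: l_def)
  have Rl: "R / l = \<eta> / 3" using R eta by (simp add: l_def)
  define c where "c = 2 * \<eta> / (3 * l)"
  have c: "0 < c" using eta l by (simp add: c_def)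
  have lc: "l / 2 * c = \<eta> / 3" using l by (simp add: c_def)
  have "ennreal c \<le> (\<integral>\<^sup>+x. ennreal ((m h x)\<^sup>2) \<partial>lborel)" if h: "\<delta> \<le> h" "h \<le> H" for h
  proof -
    have h0: "0 < h" using h d by simp
    define t where "t = s / h"
    have ht: "h * t = s" using h0 by (simp add: t_def)
    have "\<bar>t\<bar> \<le> r"
    proof -
      have "s / h \<le> s / \<delta>" using s(1) h(1) d(1) by (simp add: frac_le)
      also have "\<dots> < r" using s(2) d(1) by (simp add: divide_less_eq)
      finally show ?thesis using s(1) h0 by (simp add: t_def abs_divide)
    qed
    then have ft: "1 / 2 \<le> cmod (char_fun f t)" by (rule r(2))
    have "cmod (char_fun (m h) t) = cmod (char_fun f t) * cmod (char_fun K s - 1)"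
      by (simp add: E1[OF h0] ht norm_mult)
    also have "\<dots> \<ge> 1 / 2 * cmod (char_fun K s - 1)"
      using ft by (intro mult_right_mono) auto
    finally have a: "\<eta> \<le> cmod (char_fun (m h) t)" by (simp add: \<eta>_def)
    let ?I = "\<integral>\<^sup>+x. ennreal ((m h x)\<^sup>2) \<partial>lborel"
    let ?X = "TT H R + TF R"
    have "ennreal \<eta> \<le> ennreal (cmod (char_fun (m h) t))" using a by (rule ennreal_leI)
    also have "\<dots> \<le> (\<integral>\<^sup>+x. ennreal \<bar>m h x\<bar> \<partial>lborel)" by (rule char_bound)
    also have "\<dots> = (\<integral>\<^sup>+x. ennreal \<bar>m h x\<bar> * indicator {-R..R} x \<partial>lborel) + (\<integral>\<^sup>+x. ennreal \<bar>m h x\<bar> * indicator {x. R < \<bar>x\<bar>} x \<partial>lborel)"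
      by (rule split_abs[OF h0])
    also have "\<dots> \<le> (ennreal (l / 2) * ?I + ennreal (R / l)) + ?X"
      by (intro add_mono local_bound[OF l] tail_bound[OF h0 h(2)]) (use R m_meas[OF h0] in auto)
    finally have main: "ennreal \<eta> \<le> ennreal (l / 2) * ?I + ennreal (\<eta> / 3) + ?X" by (simp add: Rl)
    show ?thesis
    proof (rule ccontr)
      assume "\<not> ennreal c \<le> ?I"
      then have Ilt: "?I < ennreal c" by simp
      then obtain i where i: "?I = ennreal i" "0 \<le> i" "i < c"
        by (cases ?I) (auto simp: ennreal_less_iff)
      obtain x where x: "?X = ennreal x" "0 \<le> x" "x < \<eta> / 3"
        using R(2) by (cases ?X) (auto simp: ennreal_less_iff)
      have e1: "ennreal (l / 2) * ennreal i = ennreal (l / 2 * i)" using l i by (subst ennreal_mult) auto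
      have e2: "ennreal (l / 2 * i) + ennreal (\<eta> / 3) + ennreal x = ennreal (l / 2 * i + \<eta> / 3 + x)"
        using l i x eta by (simp add: ennreal_plus)
      have "ennreal \<eta> \<le> ennreal (l / 2 * i + \<eta> / 3 + x)"
        using main unfolding i(1) x(1) e1 e2 .
      then have "\<eta> \<le> l / 2 * i + \<eta> / 3 + x"
        using l eta i x by (subst (asm) ennreal_le_iff) auto
      moreover have "l / 2 * i < l / 2 * c" using i l by simp
      ultimately show False using lc x by linarith
    qed
  qed
  then show ?thesis using c by blast
qed

lemma lowerI: assumes d: "0 < \<delta>"
  shows "\<exists>c>0. \<forall>h\<ge>\<delta>. ennreal c \<le> (\<integral>\<^sup>+x. ennreal ((m h x)\<^sup>2) \<partial>lborel)"
proof -
  define H where "H = max \<delta> (4 * NK2 / NF2)"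
  obtain c where c: "0 < c" "\<And>h. \<delta> \<le> h \<Longrightarrow> h \<le> H \<Longrightarrow> ennreal c \<le> (\<integral>\<^sup>+x. ennreal ((m h x)\<^sup>2) \<partial>lborel)"
    using D2[OF d, of H] by (auto simp: H_def)
  define c0 where "c0 = min c (NF2 / 4)"
  have c0: "0 < c0" using c(1) NF2_pos by (simp add: c0_def)
  have "ennreal c0 \<le> (\<integral>\<^sup>+x. ennreal ((m h x)\<^sup>2) \<partial>lborel)" if h: "\<delta> \<le> h" for h
  proof (cases "h \<le> H")
    case True
    then have "ennreal c \<le> (\<integral>\<^sup>+x. ennreal ((m h x)\<^sup>2) \<partial>lborel)" using c h by simp
    moreover have "ennreal c0 \<le> ennreal c" by (rule ennreal_leI) (simp add: c0_def)
    ultimately show ?thesis by (rule order_trans[rotated])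
  next
    case False
    have h0: "0 < h" using h d by simp
    have "4 * NK2 / NF2 < h" using False by (simp add: H_def)
    then have "4 * NK2 < h * NF2" using NF2_pos by (simp add: divide_less_eq mult.commute)
    then have le: "NK2 / h \<le> NF2 / 4" using h0 by (simp add: divide_le_eq field_simps)
    have "ennreal (NF2 / 2) \<le> (\<integral>\<^sup>+x. ennreal ((m h x)\<^sup>2) \<partial>lborel) + ennreal (NK2 / h)" by (rule D1[OF h0])
    also have "\<dots> \<le> (\<integral>\<^sup>+x. ennreal ((m h x)\<^sup>2) \<partial>lborel) + ennreal (NF2 / 4)"
      using le by (intro add_mono ennreal_leI) auto
    finally have "ennreal (NF2 / 2 - NF2 / 4) \<le> (\<integral>\<^sup>+x. ennreal ((m h x)\<^sup>2) \<partial>lborel)"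
      by (rule ennreal_sub_le[rotated]) (use NF2_pos in simp)
    moreover have "c0 \<le> NF2 / 2 - NF2 / 4" by (simp add: c0_def)
    ultimately show ?thesis using ennreal_leI order_trans by blast
  qed
  then show ?thesis using c0 by blast
qed

lemma unif_lower: "\<exists>N. \<forall>n\<ge>N. \<forall>h>0. ennreal Z \<le> of_nat n * MISE n f K h"
proof (cases "0 \<le> Z")
  case False
  then show ?thesis by (intro exI[of _ 0]) (simp add: ennreal_neg)
next
  case Z: True
  define \<delta> where "\<delta> = NK2 / (2 * (Z + NF2 + 1))"
  have d: "0 < \<delta>" using NK2_pos NF2_pos Z by (simp add: \<delta>_def)
  obtain c where c: "0 < c" "\<And>h. \<delta> \<le> h \<Longrightarrow> ennreal c \<le> (\<integral>\<^sup>+x. ennreal ((m h x)\<^sup>2) \<partial>lborel)"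
    using lowerI[OF d] by auto
  define N where "N = max 1 (nat \<lceil>Z / c\<rceil>)"
  have "ennreal Z \<le> of_nat n * MISE n f K h" if n: "N \<le> n" and h: "0 < h" for n h
  proof -
    have n0: "0 < n" using n by (simp add: N_def)
    show ?thesis
    proof (cases "h < \<delta>")
      case True
      have "2 * h * (Z + NF2 + 1) < NK2"
        using True NF2_pos Z h by (simp add: \<delta>_def field_simps)
      then have "Z + NF2 \<le> NK2 / (2 * h)" using h by (simp add: field_simps)
      then have "ennreal (Z + NF2) \<le> ennreal (NK2 / (2 * h))" by (rule ennreal_leI)
      also have "\<dots> \<le> of_nat n * MISE n f K h + ennreal NF2" by (rule A1[OF n0 h])
      finally have "ennreal (Z + NF2 - NF2) \<le> of_nat n * MISE n f K h"
        by (rule ennreal_sub_le[rotated]) (use NF2_pos in simp)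
      then show ?thesis by simp
    next
      case False
      have Zn: "Z \<le> real n * c"
      proof -
        have "Z / c \<le> real (nat \<lceil>Z / c\<rceil>)" by linarith
        also have "\<dots> \<le> real n" using n by (simp add: N_def)
        finally show ?thesis using c(1) by (simp add: divide_le_eq mult.commute)
      qed
      have "ennreal Z \<le> ennreal (real n * c)" using Zn by (rule ennreal_leI)
      also have "\<dots> = of_nat n * ennreal c" using c(1) by (simp add: ennreal_mult ennreal_of_nat_eq_real_of_nat)
      also have "\<dots> \<le> of_nat n * (\<integral>\<^sup>+x. ennreal ((m h x)\<^sup>2) \<partial>lborel)"
        using c(2)[of h] False by (intro mult_left_mono) auto
      also have "\<dots> \<le> of_nat n * MISE n f K h" by (rule A2[OF n0 h])
      finally show ?thesis .
    qed
  qed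
  then show ?thesis by blast
qed

lemma final: "((\<lambda>n. of_nat n * Phi n f K) \<longlongrightarrow> \<infinity>) sequentially"
proof (subst order_tendsto_iff, intro conjI allI impI)
  fix l :: ennreal assume "l < \<infinity>"
  then obtain z where z: "l = ennreal z" "0 \<le> z" by (cases l) auto
  obtain N where N: "\<And>n h. N \<le> n \<Longrightarrow> 0 < h \<Longrightarrow> ennreal (z + 1) \<le> of_nat n * MISE n f K h"
    using unif_lower[of "z + 1"] by blast
  have ev: "l < of_nat n * Phi n f K" if n: "max N 1 \<le> n" for n
  proof -
    have n0: "0 < n" using n by simp
    have nn: "(of_nat n :: ennreal) \<noteq> 0" "(of_nat n :: ennreal) \<noteq> \<top>" using n0 by auto
    have on: "(of_nat n :: ennreal) * ennreal ((z + 1) / real n) = ennreal (z + 1)"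
      using n0 z by (simp add: ennreal_of_nat_eq_real_of_nat ennreal_mult[symmetric] del: ennreal_mult')
    have "ennreal ((z + 1) / real n) \<le> Phi n f K"
      unfolding Phi_def
    proof (rule INF_greatest)
      fix h :: real assume "h \<in> {0<..}"
      then have "of_nat n * ennreal ((z + 1) / real n) \<le> of_nat n * MISE n f K h"
        using N[of n h] n by (simp add: on)
      then show "ennreal ((z + 1) / real n) \<le> MISE n f K h"
        using ennreal_mult_le_mult_iff[OF nn] by simp
    qed
    then have "of_nat n * ennreal ((z + 1) / real n) \<le> of_nat n * Phi n f K" by (rule mult_left_mono) simp
    then have "ennreal (z + 1) \<le> of_nat n * Phi n f K" by (simp add: on)
    moreover have "l < ennreal (z + 1)" using z by (simp add: ennreal_lessI)
    ultimately show ?thesis by simp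
  qed
  then show "eventually (\<lambda>n. l < of_nat n * Phi n f K) sequentially"
    unfolding eventually_sequentially using ev by blast
next
  fix u :: ennreal assume "\<infinity> < u"
  then show "eventually (\<lambda>n. of_nat n * Phi n f K < u) sequentially" by simp
qed

end


theorem lemma2:
  fixes K f :: "real \<Rightarrow> real"
  assumes "is_kernel K"
    and "integrable lborel (\<lambda>x. (K x)\<^sup>2)"
    and "S_K K = 0"
    and "is_density f"
    and "integrable lborel (\<lambda>x. (f x)\<^sup>2)"
  shows "((\<lambda>n. of_nat n * Phi n f K) \<longlongrightarrow> \<infinity>) sequentially"
proof -
  interpret kset K f using assms by (simp add: kset_def)
  show ?thesis by (rule final)
qed

end
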